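(* For every positive integer $n$, the Chinese monoid $\mathsf{Ch}_n$ has a faithful (i.e. injective) tropical linear representation $\rho:\mathsf{Ch}_n\to\mathcal U_{n(n+1)}(\mathbb T)$ by upper triangular tropical matrices; more precisely, the image consists of block-diagonal triangular matrices whose diagonal blocks are $2\times 2$ upper triangular tropical matrices.
   Context: The Chinese monoid of rank $n$ is the monoid $\mathsf{Ch}_n=\langle a_1,\dots,a_n\rangle$ presented by the relations $a_ja_ka_i=a_ka_ja_i=a_ka_ia_j$ for all $1\le i\le j\le k\le n$. The tropical (max-plus) semiring is $\mathbb T=\mathbb R\cup\{-\infty\}$ with addition $a\vee b=\max\{a,b\}$ and multiplication $a+b$ (ordinary sum). $\mathcal M_N(\mathbb T)$ denotes the monoid of $N\times N$ matrices over $\mathbb T$ with the induced matrix product $(AB)_{ij}=\max_k (A_{ik}+B_{kj})$, and $\mathcal U_N(\mathbb T)$ the submonoid of upper triangular matrices (entries below the diagonal equal to $-\infty$). A tropical linear representation of a monoid $\mathcal S$ is a monoid homomorphism $\rho:\mathcal S\to\mathcal M_N(\mathbb T)$, i.e. $\rho(xy)=\rho(x)\rho(y)$ for all $x,y$; it is faithful if injective. *)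

theory Defs
  imports Main "HOL.Real"
begin

datatype trop = NegInf | Fin real

fun tadd :: "trop \<Rightarrow> trop \<Rightarrow> trop" where
  "tadd NegInf b = b"
| "tadd a NegInf = a"
| "tadd (Fin x) (Fin y) = Fin (max x y)"

fun tmul :: "trop \<Rightarrow> trop \<Rightarrow> trop" where
  "tmul NegInf b = NegInf"
| "tmul a NegInf = NegInf"
| "tmul (Fin x) (Fin y) = Fin (x + y)"

definition tsum :: "(nat \<Rightarrow> trop) \<Rightarrow> nat \<Rightarrow> trop" where
  "tsum f N = foldr (\<lambda>k acc. tadd (f k) acc) [0..<N] NegInf"

type_synonym tmat = "nat \<Rightarrow> nat \<Rightarrow> trop"

definition tmats :: "nat \<Rightarrow> tmat set" where
  "tmats N = {A. \<forall>i j. (N \<le> i \<or> N \<le> j) \<longrightarrow> A i j = NegInf}"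

definition tmat_mult :: "nat \<Rightarrow> tmat \<Rightarrow> tmat \<Rightarrow> tmat" where
  "tmat_mult N A B = (\<lambda>i j. tsum (\<lambda>k. tmul (A i k) (B k j)) N)"

definition tmat_one :: "nat \<Rightarrow> tmat" where
  "tmat_one N = (\<lambda>i j. if i = j \<and> i < N then Fin 0 else NegInf)"

definition upper_tri :: "nat \<Rightarrow> tmat \<Rightarrow> bool" where
  "upper_tri N A \<longleftrightarrow> A \<in> tmats N \<and> (\<forall>i j. j < i \<longrightarrow> A i j = NegInf)"

text \<open>Block-diagonal with 2x2 upper triangular diagonal blocks on index pairs {2m, 2m+1}:
  the only possibly finite entries are diagonal ones and (2m, 2m+1).\<close>
definition block2_upper :: "nat \<Rightarrow> tmat \<Rightarrow> bool" where
  "block2_upper N A \<longleftrightarrow> upper_tri N A \<and>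
     (\<forall>i j. A i j \<noteq> NegInf \<longrightarrow> (i = j \<or> (even i \<and> j = i + 1)))"

section \<open>The Chinese monoid Ch_n as words over {1..n} modulo its congruence\<close>

definition ch_words :: "nat \<Rightarrow> nat list set" where
  "ch_words n = {w. set w \<subseteq> {1..n}}"

definition ch_step :: "nat \<Rightarrow> (nat list \<times> nat list) set" where
  "ch_step n = {(x @ l @ y, x @ r @ y) | x y l r. set x \<subseteq> {1..n} \<and> set y \<subseteq> {1..n} \<and>
     (\<exists>i j k. 1 \<le> i \<and> i \<le> j \<and> j \<le> k \<and> k \<le> n \<and>
        ((l = [j,k,i] \<and> r = [k,j,i]) \<or> (l = [k,j,i] \<and> r = [k,i,j])))}"

definition ch_eq :: "nat \<Rightarrow> nat list \<Rightarrow> nat list \<Rightarrow> bool" where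
  "ch_eq n u v \<longleftrightarrow> (u, v) \<in> (ch_step n \<union> (ch_step n)\<inverse>)\<^sup>*"

end

theory Submission
  imports Defs "HOL-Library.Multiset"
begin


lemma ch_eq_refl: "ch_eq n u u" by (simp add: ch_eq_def)

lemma ch_eq_sym: "ch_eq n u v \<Longrightarrow> ch_eq n v u"
  unfolding ch_eq_def
  by (metis converse_Un converse_converse rtrancl_converseI sup_commute)

lemma ch_eq_trans: "ch_eq n u v \<Longrightarrow> ch_eq n v w \<Longrightarrow> ch_eq n u w"
  unfolding ch_eq_def by (meson rtrancl_trans)

lemma ch_step_ctx:
  assumes "(u, v) \<in> ch_step n" "set p \<subseteq> {1..n}" "set q \<subseteq> {1..n}"
  shows "(p @ u @ q, p @ v @ q) \<in> ch_step n"
proof -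
  from assms(1) obtain x y l r where u: "u = x @ l @ y" and v: "v = x @ r @ y"
    and xy: "set x \<subseteq> {1..n}" "set y \<subseteq> {1..n}"
    and rel: "\<exists>i j k. 1 \<le> i \<and> i \<le> j \<and> j \<le> k \<and> k \<le> n \<and>
        ((l = [j,k,i] \<and> r = [k,j,i]) \<or> (l = [k,j,i] \<and> r = [k,i,j]))"
    unfolding ch_step_def by blast
  have "p @ u @ q = (p @ x) @ l @ (y @ q)" "p @ v @ q = (p @ x) @ r @ (y @ q)"
    using u v by auto
  moreover have "set (p @ x) \<subseteq> {1..n}" "set (y @ q) \<subseteq> {1..n}" using xy assms by auto
  ultimately show ?thesis using rel unfolding ch_step_def by blast
qed

lemma ch_eq_ctx:
  assumes "ch_eq n u v" "set p \<subseteq> {1..n}" "set q \<subseteq> {1..n}"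
  shows "ch_eq n (p @ u @ q) (p @ v @ q)"
  using assms(1) unfolding ch_eq_def
proof (induction rule: rtrancl_induct)
  case base then show ?case by simp
next
  case (step y z)
  from step.hyps(2) have "(p @ y @ q, p @ z @ q) \<in> ch_step n \<union> (ch_step n)\<inverse>"
    using ch_step_ctx[OF _ assms(2,3)] by auto
  with step.IH show ?case by (meson rtrancl.rtrancl_into_rtrancl)
qed

lemma ch_eq_ctxL: "ch_eq n u v \<Longrightarrow> set p \<subseteq> {1..n} \<Longrightarrow> ch_eq n (p @ u) (p @ v)"
  using ch_eq_ctx[of n u v p "[]"] by simp
lemma ch_eq_ctxR: "ch_eq n u v \<Longrightarrow> set q \<subseteq> {1..n} \<Longrightarrow> ch_eq n (u @ q) (v @ q)"
  using ch_eq_ctx[of n u v "[]" q] by simp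

lemma ch_rel1: "1 \<le> i \<Longrightarrow> i \<le> j \<Longrightarrow> j \<le> k \<Longrightarrow> k \<le> n \<Longrightarrow> ch_eq n [j,k,i] [k,j,i]"
  unfolding ch_eq_def ch_step_def
  by (rule r_into_rtrancl, rule UnI1, simp, rule exI[of _ "[]"], rule exI[of _ "[]"], auto)
lemma ch_rel2: "1 \<le> i \<Longrightarrow> i \<le> j \<Longrightarrow> j \<le> k \<Longrightarrow> k \<le> n \<Longrightarrow> ch_eq n [k,j,i] [k,i,j]"
  unfolding ch_eq_def ch_step_def
  by (rule r_into_rtrancl, rule UnI1, simp, rule exI[of _ "[]"], rule exI[of _ "[]"], auto)



definition pairs :: "nat \<Rightarrow> nat list \<Rightarrow> nat list" where
  "pairs t L = concat (map (\<lambda>s. [t,s]) L)"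
definition row :: "nat \<Rightarrow> nat list \<Rightarrow> nat \<Rightarrow> nat list" where
  "row t L m = pairs t L @ replicate m t"
definition pre :: "nat \<Rightarrow> (nat \<Rightarrow> nat list) \<Rightarrow> (nat \<Rightarrow> nat) \<Rightarrow> nat list" where
  "pre t Ls m = concat (map (\<lambda>r. row r (Ls r) (m r)) [1..<Suc t])"
definition validL :: "(nat \<Rightarrow> nat list) \<Rightarrow> bool" where
  "validL Ls \<longleftrightarrow> (\<forall>r. sorted (Ls r) \<and> set (Ls r) \<subseteq> {1..<r})"

lemma pairs_simps[simp]: "pairs t [] = []" "pairs t (a # L) = [t,a] @ pairs t L"
  "pairs t (A @ B) = pairs t A @ pairs t B"
  by (simp_all add: pairs_def)

lemma set_pairs: "set L \<subseteq> {1..n} \<Longrightarrow> t \<in> {1..n} \<Longrightarrow> set (pairs t L) \<subseteq> {1..n}"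
  by (induction L) auto

lemma C1: "1 \<le> s \<Longrightarrow> s \<le> y \<Longrightarrow> y \<le> t \<Longrightarrow> t \<le> n \<Longrightarrow> ch_eq n [t,s,y] [y,t,s]"
  by (meson ch_eq_sym ch_eq_trans ch_rel1 ch_rel2)

lemma C4: "1 \<le> y \<Longrightarrow> y \<le> s \<Longrightarrow> s \<le> t \<Longrightarrow> t \<le> n \<Longrightarrow> ch_eq n [t,s,y] [t,y,s]"
  by (rule ch_rel2) auto

lemma C3: "1 \<le> y \<Longrightarrow> y \<le> t \<Longrightarrow> t \<le> n \<Longrightarrow> ch_eq n [t,t,y] [t,y,t]"
  using ch_rel2[of y t t n] by simp

lemma C2: assumes "1 \<le> y" "y \<le> s" "s \<le> t" "t \<le> n"
  shows "ch_eq n [t,s,t,y] [t,y,t,s]"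
proof -
  have "ch_eq n ([t] @ [s,t,y]) ([t] @ [t,s,y])"
    by (rule ch_eq_ctxL[OF ch_rel1]) (use assms in auto)
  moreover have "ch_eq n ([t] @ [t,s,y]) ([t] @ [t,y,s])"
    by (rule ch_eq_ctxL[OF C4]) (use assms in auto)
  moreover have "ch_eq n ([t,t,y] @ [s]) ([t,y,t] @ [s])"
    by (rule ch_eq_ctxR[OF C3]) (use assms in auto)
  ultimately show ?thesis by (auto intro: ch_eq_trans)
qed

lemma M1:
  assumes "\<forall>s\<in>set L. 1 \<le> s \<and> s \<le> y" "1 \<le> y" "y \<le> t" "t \<le> n"
  shows "ch_eq n (pairs t L @ [y]) ([y] @ pairs t L)"
  using assms(1)
proof (induction L)
  case Nil then show ?case by (simp add: ch_eq_refl)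
next
  case (Cons a L)
  have al: "set (pairs t L) \<subseteq> {1..n}"
    by (rule set_pairs) (use Cons.prems assms in auto)
  have "ch_eq n ([t,a] @ (pairs t L @ [y])) ([t,a] @ ([y] @ pairs t L))"
    by (rule ch_eq_ctxL) (use Cons assms in auto)
  moreover have "ch_eq n ([t,a,y] @ pairs t L) ([y,t,a] @ pairs t L)"
    by (rule ch_eq_ctxR[OF C1 al]) (use Cons.prems assms in auto)
  ultimately show ?case by (auto intro: ch_eq_trans)
qed

lemma M2:
  assumes "\<forall>s\<in>set L. y \<le> s \<and> s \<le> t" "1 \<le> y" "y \<le> t" "t \<le> n"
  shows "ch_eq n (pairs t L @ [t,y]) ([t,y] @ pairs t L)"
  using assms(1)
proof (induction L)
  case Nil then show ?case by (simp add: ch_eq_refl)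
next
  case (Cons a L)
  have al: "set (pairs t L) \<subseteq> {1..n}"
    by (rule set_pairs) (use Cons.prems assms in auto)
  have "ch_eq n ([t,a] @ (pairs t L @ [t,y])) ([t,a] @ ([t,y] @ pairs t L))"
    by (rule ch_eq_ctxL) (use Cons assms in auto)
  moreover have "ch_eq n ([t,a,t,y] @ pairs t L) ([t,y,t,a] @ pairs t L)"
    by (rule ch_eq_ctxR[OF C2 al]) (use Cons.prems assms in auto)
  ultimately show ?case by (auto intro: ch_eq_trans)
qed

lemma M3:
  assumes "1 \<le> y" "y \<le> t" "t \<le> n"
  shows "ch_eq n (replicate m t @ [t,y]) ([t,y] @ replicate m t)"
proof (induction m)
  case 0 then show ?case by (simp add: ch_eq_refl)
next
  case (Suc m)
  have al: "set (replicate m t) \<subseteq> {1..n}" using assms by auto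
  have "ch_eq n ([t] @ (replicate m t @ [t,y])) ([t] @ ([t,y] @ replicate m t))"
    by (rule ch_eq_ctxL[OF Suc]) (use assms in auto)
  moreover have "ch_eq n ([t,t,y] @ replicate m t) ([t,y,t] @ replicate m t)"
    by (rule ch_eq_ctxR[OF C3 al]) (use assms in auto)
  ultimately show ?case by (auto intro: ch_eq_trans)
qed

lemma sorted_split:
  "sorted L \<Longrightarrow> \<exists>A B. L = A @ B \<and> (\<forall>a\<in>set A. a \<le> y) \<and> (\<forall>b\<in>set B. y < b)"
proof (induction L)
  case Nil then show ?case by auto
next
  case (Cons x L)
  show ?case
  proof (cases "x \<le> y")
    case True
    with Cons obtain A B where "L = A @ B" "\<forall>a\<in>set A. a \<le> y" "\<forall>b\<in>set B. y < b" by auto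
    with True show ?thesis by (intro exI[of _ "x # A"] exI[of _ B]) auto
  next
    case False
    with Cons.prems show ?thesis by (intro exI[of _ "[]"] exI[of _ "x # L"]) auto
  qed
qed

lemma row_lemma:
  assumes L: "sorted L" "set L \<subseteq> {1..<T}" and y: "1 \<le> y" "y < T" and Tn: "T \<le> n"
  shows "(\<exists>L' m'. sorted L' \<and> set L' \<subseteq> {1..<T} \<and> ch_eq n (row T L m @ [y]) (row T L' m'))
    \<or> (\<exists>z L' m'. 1 \<le> z \<and> z < T \<and> sorted L' \<and> set L' \<subseteq> {1..<T} \<and>
          ch_eq n (row T L m @ [y]) ([z] @ row T L' m'))"
proof -
  obtain A B where AB: "L = A @ B" "\<forall>a\<in>set A. a \<le> y" "\<forall>b\<in>set B. y < b"
    using sorted_split[OF L(1)] by blast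
  have sA: "sorted A" "sorted B" "\<forall>a\<in>set A. \<forall>b\<in>set B. a \<le> b"
    using L(1) AB(1) by (auto simp: sorted_append)
  have setA: "set A \<subseteq> {1..<T}" "set B \<subseteq> {1..<T}" using L(2) AB(1) by auto
  have sAyB: "sorted (A @ y # B)" using sA AB
    by (auto simp: sorted_append intro: order.strict_implies_order)
  have setAyB: "set (A @ y # B) \<subseteq> {1..<T}" using setA y by auto
  have pA: "set (pairs T A) \<subseteq> {1..n}" by (rule set_pairs) (use setA Tn y in auto)
  have pB: "set (pairs T B) \<subseteq> {1..n}" by (rule set_pairs) (use setA Tn y in auto)
  show ?thesis
  proof (cases "m > 0")
    case True
    then obtain m1 where m1: "m = Suc m1" by (cases m) auto
    have r: "row T L m @ [y] = (pairs T A @ pairs T B) @ (replicate m1 T @ [T,y])"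
      unfolding row_def AB(1) m1 by (simp add: replicate_append_same[symmetric])
    have s1: "ch_eq n ((pairs T A @ pairs T B) @ (replicate m1 T @ [T,y]))
                      ((pairs T A @ pairs T B) @ ([T,y] @ replicate m1 T))"
      by (rule ch_eq_ctxL[OF M3]) (use y Tn pA pB in auto)
    have s2: "ch_eq n (pairs T A @ (pairs T B @ [T,y]) @ replicate m1 T)
                      (pairs T A @ ([T,y] @ pairs T B) @ replicate m1 T)"
      by (rule ch_eq_ctx[OF M2]) (use y Tn pA pB AB setA in auto)
    have "ch_eq n (row T L m @ [y]) (row T (A @ y # B) m1)"
      using ch_eq_trans[OF s1[simplified] s2[simplified]] unfolding r by (simp add: row_def)
    then show ?thesis using sAyB setAyB by blast
  next
    case False
    hence m0: "m = 0" by simp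
    show ?thesis
    proof (cases "B = []")
      case True
      have "ch_eq n (pairs T A @ [y]) ([y] @ pairs T A)"
        by (rule M1) (use AB setA y Tn in auto)
      then have "ch_eq n (row T L m @ [y]) ([y] @ row T L m)"
        using True AB(1) m0 by (simp add: row_def)
      then show ?thesis using y L by blast
    next
      case False
      then obtain B' s0 where B: "B = B' @ [s0]" by (cases B rule: rev_cases) auto
      have s0: "y < s0" "s0 < T" "1 \<le> s0" using AB setA B by auto
      have B'le: "\<forall>b\<in>set B'. b \<le> s0" using sA(2) B by (auto simp: sorted_append)
      have pB': "set (pairs T B') \<subseteq> {1..n}" by (rule set_pairs) (use setA B Tn y in auto)
      have r: "row T L m @ [y] = (pairs T A @ pairs T B') @ [T,s0,y] @ []"
        unfolding row_def AB(1) m0 B by simp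
      have s1: "ch_eq n ((pairs T A @ pairs T B') @ [T,s0,y] @ []) ((pairs T A @ pairs T B') @ [T,y,s0] @ [])"
        by (rule ch_eq_ctx[OF C4]) (use y s0 Tn pA pB' in auto)
      have e1: "(pairs T A @ pairs T B') @ [T,y,s0] @ [] = pairs T (A @ B' @ [y]) @ [s0]" by simp
      have s2: "ch_eq n (pairs T (A @ B' @ [y]) @ [s0]) ([s0] @ pairs T (A @ B' @ [y]))"
        by (rule M1) (use AB setA B B'le y s0 Tn in auto)
      have s3: "ch_eq n (([s0] @ pairs T A) @ (pairs T B' @ [T,y]) @ [])
                        (([s0] @ pairs T A) @ ([T,y] @ pairs T B') @ [])"
        by (rule ch_eq_ctx[OF M2]) (use AB B setA y s0 Tn pA B'le in auto)
      have s12: "ch_eq n (row T L m @ [y]) ([s0] @ pairs T (A @ B' @ [y]))"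
        using ch_eq_trans[OF s1[unfolded e1] s2] unfolding r .
      have e2: "[s0] @ pairs T (A @ B' @ [y]) = ([s0] @ pairs T A) @ (pairs T B' @ [T,y]) @ []" by simp
      have e3: "([s0] @ pairs T A) @ ([T,y] @ pairs T B') @ [] = [s0] @ row T (A @ y # B') 0"
        by (simp add: row_def)
      have "ch_eq n (row T L m @ [y]) ([s0] @ row T (A @ y # B') 0)"
        using ch_eq_trans[OF s12[unfolded e2] s3[unfolded e3]] .
      moreover have "sorted (A @ y # B')" "set (A @ y # B') \<subseteq> {1..<T}"
        using sAyB setAyB B by (auto simp: sorted_append)
      ultimately show ?thesis using s0 by blast
    qed
  qed
qed



lemma pre_0[simp]: "pre 0 Ls m = []" by (simp add: pre_def)
lemma pre_Suc: "pre (Suc t) Ls m = pre t Ls m @ row (Suc t) (Ls (Suc t)) (m (Suc t))"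
  by (simp add: pre_def)

lemma pre_cong: "(\<And>r. 1 \<le> r \<Longrightarrow> r \<le> t \<Longrightarrow> Ls r = Ls' r \<and> m r = m' r) \<Longrightarrow> pre t Ls m = pre t Ls' m'"
  unfolding pre_def by (intro arg_cong[where f=concat] map_cong) auto

lemma set_row: assumes "set L \<subseteq> {1..<T}" "1 \<le> T" "T \<le> n" shows "set (row T L m) \<subseteq> {1..n}"
proof -
  have "set L \<subseteq> {1..n}" using assms by auto
  then show ?thesis unfolding row_def using set_pairs[of L n T] assms by auto
qed

lemma set_pre: "validL Ls \<Longrightarrow> t \<le> n \<Longrightarrow> set (pre t Ls m) \<subseteq> {1..n}"
proof (induction t)
  case 0 then show ?case by simp
next
  case (Suc t)
  then show ?case using set_row[of "Ls (Suc t)" "Suc t" n "m (Suc t)"]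
    by (auto simp: pre_Suc validL_def)
qed

lemma ins:
  "t \<le> n \<Longrightarrow> validL Ls \<Longrightarrow> 1 \<le> y \<Longrightarrow> y \<le> t \<Longrightarrow>
   \<exists>Ls' m'. validL Ls' \<and> (\<forall>r>t. Ls' r = Ls r \<and> m' r = m r) \<and> ch_eq n (pre t Ls m @ [y]) (pre t Ls' m')"
proof (induction t arbitrary: Ls m y)
  case 0 then show ?case by simp
next
  case (Suc t)
  define T where "T = Suc t"
  have LT: "sorted (Ls T)" "set (Ls T) \<subseteq> {1..<T}" using Suc.prems(2) by (auto simp: validL_def)
  have sp: "set (pre t Ls m) \<subseteq> {1..n}" using set_pre[OF Suc.prems(2)] Suc.prems(1) by simp
  show ?case
  proof (cases "y = T")
    case True
    define m' where "m' = m(T := Suc (m T))"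
    have p: "pre t Ls m' = pre t Ls m" by (rule pre_cong) (auto simp: m'_def T_def)
    have "pre T Ls m' = pre t Ls m' @ row T (Ls T) (m' T)" by (simp add: pre_Suc T_def)
    also have "... = pre t Ls m @ row T (Ls T) (Suc (m T))" using p by (simp add: m'_def)
    also have "... = pre T Ls m @ [y]" by (simp add: pre_Suc T_def row_def True replicate_append_same)
    finally have "pre T Ls m @ [y] = pre T Ls m'" by simp
    moreover have "\<forall>r>Suc t. Ls r = Ls r \<and> m' r = m r" by (simp add: m'_def T_def)
    ultimately show ?thesis using Suc.prems(2) ch_eq_refl unfolding T_def by metis
  next
    case False
    hence yT: "y < T" using Suc.prems T_def by simp
    from row_lemma[OF LT Suc.prems(3) yT, of n "m T"] Suc.prems(1)
    consider (abs) L' m1 where "sorted L'" "set L' \<subseteq> {1..<T}" "ch_eq n (row T (Ls T) (m T) @ [y]) (row T L' m1)"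
      | (carry) z L' m1 where "1 \<le> z" "z < T" "sorted L'" "set L' \<subseteq> {1..<T}"
          "ch_eq n (row T (Ls T) (m T) @ [y]) ([z] @ row T L' m1)"
      unfolding T_def by blast
    then show ?thesis
    proof cases
      case abs
      define Ls' where "Ls' = Ls(T := L')"
      define m' where "m' = m(T := m1)"
      have v: "validL Ls'" using Suc.prems(2) abs unfolding validL_def Ls'_def by auto
      have "pre t Ls' m' = pre t Ls m" by (rule pre_cong) (auto simp: m'_def Ls'_def T_def)
      hence e: "pre T Ls' m' = pre t Ls m @ row T L' m1"
        by (simp add: pre_Suc T_def Ls'_def m'_def)
      have "ch_eq n (pre t Ls m @ (row T (Ls T) (m T) @ [y])) (pre t Ls m @ row T L' m1)"
        by (rule ch_eq_ctxL[OF abs(3) sp])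
      hence "ch_eq n (pre T Ls m @ [y]) (pre T Ls' m')"
        unfolding e by (simp add: pre_Suc T_def)
      moreover have "\<forall>r>Suc t. Ls' r = Ls r \<and> m' r = m r" by (simp add: Ls'_def m'_def T_def)
      ultimately show ?thesis using v unfolding T_def by metis
    next
      case carry
      define Ls1 where "Ls1 = Ls(T := L')"
      define m1' where "m1' = m(T := m1)"
      have v1: "validL Ls1" using Suc.prems(2) carry unfolding validL_def Ls1_def by auto
      have p1: "pre t Ls1 m1' = pre t Ls m" by (rule pre_cong) (auto simp: m1'_def Ls1_def T_def)
      from Suc.IH[of Ls1 z m1'] Suc.prems(1) v1 carry(1,2)
      obtain Ls2 m2 where IH: "validL Ls2" "\<forall>r>t. Ls2 r = Ls1 r \<and> m2 r = m1' r"
        "ch_eq n (pre t Ls1 m1' @ [z]) (pre t Ls2 m2)" unfolding T_def by auto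
      have sr: "set (row T L' m1) \<subseteq> {1..n}" using set_row[OF carry(4)] Suc.prems(1) T_def by auto
      have s1: "ch_eq n (pre t Ls m @ (row T (Ls T) (m T) @ [y])) (pre t Ls m @ ([z] @ row T L' m1))"
        by (rule ch_eq_ctxL[OF carry(5) sp])
      have s2: "ch_eq n ((pre t Ls m @ [z]) @ row T L' m1) (pre t Ls2 m2 @ row T L' m1)"
        by (rule ch_eq_ctxR[OF IH(3)[unfolded p1] sr])
      have e: "pre T Ls2 m2 = pre t Ls2 m2 @ row T L' m1"
        using IH(2) by (simp add: pre_Suc T_def Ls1_def m1'_def)
      have "ch_eq n (pre T Ls m @ [y]) (pre T Ls2 m2)"
        using ch_eq_trans[OF s1[simplified] s2[simplified]] unfolding e by (simp add: pre_Suc T_def)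
      moreover have "\<forall>r>Suc t. Ls2 r = Ls r \<and> m2 r = m r" using IH(2) by (auto simp: Ls1_def m1'_def T_def)
      ultimately show ?thesis using IH(1) unfolding T_def by blast
    qed
  qed
qed

definition NF :: "nat \<Rightarrow> (nat \<Rightarrow> nat list) \<Rightarrow> (nat \<Rightarrow> nat) \<Rightarrow> nat list" where
  "NF n Ls m = pre n Ls m"

lemma nf_exists:
  "set u \<subseteq> {1..n} \<Longrightarrow> \<exists>Ls m. validL Ls \<and> ch_eq n u (pre n Ls m)"
proof (induction u rule: rev_induct)
  case Nil
  have "validL (\<lambda>_. [])" by (simp add: validL_def)
  moreover have "pre n (\<lambda>_. []) (\<lambda>_. 0) = []" by (simp add: pre_def row_def)
  ultimately show ?case using ch_eq_refl by metis
next
  case (snoc x u)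
  then obtain Ls m where a: "validL Ls" "ch_eq n u (pre n Ls m)" by auto
  have x: "1 \<le> x" "x \<le> n" using snoc.prems by auto
  from ins[OF order.refl a(1) x] obtain Ls' m' where
    b: "validL Ls'" "ch_eq n (pre n Ls m @ [x]) (pre n Ls' m')" by blast
  have "ch_eq n (u @ [x]) (pre n Ls m @ [x])" by (rule ch_eq_ctxR[OF a(2)]) (use x in auto)
  with b show ?case by (meson ch_eq_trans)
qed



definition cls :: "nat \<Rightarrow> nat \<Rightarrow> nat \<Rightarrow> nat" where
  "cls j k x = (if x \<le> j then 1 else if k \<le> x then 2 else 0)"

fun stp :: "nat \<times> nat \<times> nat \<Rightarrow> nat \<Rightarrow> nat \<times> nat \<times> nat" where
  "stp (a, b, d) c = (if c = 1 then (Suc a, b, min (Suc d) b) else if c = 2 then (a, Suc b, d) else (a, b, d))"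

fun smul :: "nat \<times> nat \<times> nat \<Rightarrow> nat \<times> nat \<times> nat \<Rightarrow> nat \<times> nat \<times> nat" where
  "smul (a, b, d) (a', b', d') = (a + a', b + b', min (d + a') (d' + b))"

definition st :: "nat \<Rightarrow> nat \<Rightarrow> nat list \<Rightarrow> nat \<times> nat \<times> nat" where
  "st j k w = foldl (\<lambda>s x. stp s (cls j k x)) (0, 0, 0) w"

definition valid :: "nat \<times> nat \<times> nat \<Rightarrow> bool" where
  "valid s \<longleftrightarrow> snd (snd s) \<le> fst s \<and> snd (snd s) \<le> fst (snd s)"

lemma st_Nil[simp]: "st j k [] = (0,0,0)" by (simp add: st_def)
lemma st_snoc: "st j k (w @ [x]) = stp (st j k w) (cls j k x)" by (simp add: st_def)

lemma st_valid: "valid (st j k w)"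
proof (induction w rule: rev_induct)
  case Nil then show ?case by (simp add: valid_def)
next
  case (snoc x w)
  obtain a b d where "st j k w = (a, b, d)" by (cases "st j k w") auto
  with snoc show ?case by (auto simp: st_snoc valid_def)
qed

lemma st_append: "st j k (u @ v) = smul (st j k u) (st j k v)"
proof (induction v rule: rev_induct)
  case Nil
  obtain a b d where "st j k u = (a, b, d)" by (cases "st j k u") auto
  with st_valid[of j k u] show ?case by (auto simp: valid_def)
next
  case (snoc x v)
  obtain a b d where u: "st j k u = (a, b, d)" by (cases "st j k u") auto
  obtain a' b' d' where v: "st j k v = (a', b', d')" by (cases "st j k v") auto
  have "st j k (u @ v @ [x]) = stp (st j k (u @ v)) (cls j k x)"
    using st_snoc[of j k "u @ v" x] by simp
  then show ?case using snoc u v by (auto simp: st_snoc)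
qed

lemma st_rel:
  assumes "i \<le> j'" "j' \<le> k'"
  shows "st j k [j',k',i] = st j k [k',j',i]" "st j k [k',j',i] = st j k [k',i,j']"
  using assms by (auto simp: st_def cls_def)

lemma st_step: "(u, v) \<in> ch_step n \<Longrightarrow> st j k u = st j k v"
proof -
  assume "(u, v) \<in> ch_step n"
  then obtain x y l r where u: "u = x @ l @ y" and v: "v = x @ r @ y"
    and rel: "\<exists>i j k. 1 \<le> i \<and> i \<le> j \<and> j \<le> k \<and> k \<le> n \<and>
        ((l = [j,k,i] \<and> r = [k,j,i]) \<or> (l = [k,j,i] \<and> r = [k,i,j]))"
    unfolding ch_step_def by blast
  have "st j k l = st j k r" using rel st_rel by metis
  then show ?thesis unfolding u v st_append by simp
qed

lemma st_ch_eq: "ch_eq n u v \<Longrightarrow> st j k u = st j k v"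
  unfolding ch_eq_def
proof (induction rule: rtrancl_induct)
  case base then show ?case by simp
next
  case (step y z)
  then show ?case using st_step by (metis UnE converseD)
qed

lemma stA: "fst (st j k w) = length (filter (\<lambda>x. x \<le> j) w)"
proof (induction w rule: rev_induct)
  case Nil then show ?case by simp
next
  case (snoc x w)
  obtain a b d where "st j k w = (a, b, d)" by (cases "st j k w") auto
  with snoc show ?case by (auto simp: st_snoc cls_def)
qed

lemma stB0: "\<forall>x\<in>set w. x < k \<Longrightarrow> fst (snd (st j k w)) = 0"
proof (induction w rule: rev_induct)
  case Nil then show ?case by simp
next
  case (snoc x w)
  obtain a b d where "st j k w = (a, b, d)" by (cases "st j k w") auto
  with snoc show ?case by (auto simp: st_snoc cls_def)
qed

definition Q :: "nat \<times> nat \<times> nat \<Rightarrow> bool" where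
  "Q s \<longleftrightarrow> snd (snd s) = fst s \<and> fst s \<le> fst (snd s)"

lemma Q_smul: "Q s \<Longrightarrow> Q t \<Longrightarrow> Q (smul s t)"
  by (cases s; cases t) (auto simp: Q_def)

lemma Q_pairs: "j < T \<Longrightarrow> k \<le> T \<Longrightarrow> Q (st j k (pairs T L))"
proof (induction L)
  case Nil then show ?case by (simp add: Q_def)
next
  case (Cons s L)
  have "Q (st j k [T, s])" using Cons.prems by (auto simp: st_def cls_def Q_def)
  then show ?case using Cons st_append[of j k "[T,s]" "pairs T L"] by (simp add: Q_smul)
qed

lemma Q_rep: "j < T \<Longrightarrow> k \<le> T \<Longrightarrow> Q (st j k (replicate m T))"
proof (induction m)
  case 0 then show ?case by (simp add: Q_def)
next
  case (Suc m)
  have "Q (st j k [T])" using Suc.prems by (auto simp: st_def cls_def Q_def)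
  then show ?case using Suc st_append[of j k "[T]" "replicate m T"] by (simp add: Q_smul)
qed

lemma Q_row: "j < T \<Longrightarrow> k \<le> T \<Longrightarrow> Q (st j k (row T L m))"
  unfolding row_def st_append using Q_pairs Q_rep Q_smul by blast

lemma row_filter: "j < T \<Longrightarrow> length (filter (\<lambda>x. x \<le> j) (row T L m)) = length (filter (\<lambda>x. x \<le> j) L)"
  unfolding row_def by (induction L) auto

lemma pre_letters: "validL Ls \<Longrightarrow> x \<in> set (pre t Ls m) \<Longrightarrow> 1 \<le> x \<and> x \<le> t"
  using set_pre[of Ls t t m] by auto

lemma st_pre_D:
  assumes v: "validL Ls" and jk: "j < k"
  shows "snd (snd (st j k (pre t Ls m))) = (\<Sum>T\<in>{k..t}. length (filter (\<lambda>x. x \<le> j) (Ls T)))"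
proof (induction t)
  case 0
  have "fst (snd (st j k (pre 0 Ls m))) = 0" by simp
  then show ?case using jk by simp
next
  case (Suc t)
  show ?case
  proof (cases "Suc t < k")
    case True
    have "\<forall>x\<in>set (pre (Suc t) Ls m). x < k" using pre_letters[OF v] True by fastforce
    from stB0[OF this, of j] st_valid[of j k "pre (Suc t) Ls m"] have "snd (snd (st j k (pre (Suc t) Ls m))) = 0"
      by (simp add: valid_def)
    then show ?thesis using True by simp
  next
    case False
    have Qr: "Q (st j k (row (Suc t) (Ls (Suc t)) (m (Suc t))))" using Q_row jk False by auto
    have aR: "fst (st j k (row (Suc t) (Ls (Suc t)) (m (Suc t)))) = length (filter (\<lambda>x. x \<le> j) (Ls (Suc t)))"
      using stA row_filter jk False by simp
    obtain a b d where s: "st j k (pre t Ls m) = (a, b, d)" by (cases "st j k (pre t Ls m)") auto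
    obtain a' b' d' where r: "st j k (row (Suc t) (Ls (Suc t)) (m (Suc t))) = (a', b', d')"
      by (cases "st j k (row (Suc t) (Ls (Suc t)) (m (Suc t)))") auto
    have vs: "d \<le> b" using st_valid[of j k "pre t Ls m"] s by (simp add: valid_def)
    have "snd (snd (st j k (pre (Suc t) Ls m))) = d + a'"
      using Qr vs by (simp add: pre_Suc st_append s r Q_def)
    moreover have "(\<Sum>T\<in>{k..Suc t}. length (filter (\<lambda>x. x \<le> j) (Ls T))) =
        (\<Sum>T\<in>{k..t}. length (filter (\<lambda>x. x \<le> j) (Ls T))) + length (filter (\<lambda>x. x \<le> j) (Ls (Suc t)))"
      using False by (simp add: sum.cl_ivl_Suc)
    ultimately show ?thesis using Suc.IH s aR r by simp
  qed
qed



lemma filter_le_Suc: "length (filter (\<lambda>x. x \<le> Suc r) L) = length (filter ((=) (Suc r)) L) + length (filter (\<lambda>x. x \<le> r) L)"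
  by (induction L) auto

lemma sorted_eq_filter:
  fixes L L' :: "nat list"
  assumes "sorted L" "sorted L'" "\<forall>j. length (filter (\<lambda>x. x \<le> j) L) = length (filter (\<lambda>x. x \<le> j) L')"
  shows "L = L'"
proof -
  have c: "length (filter ((=) r) L) = length (filter ((=) r) L')" for r
  proof (cases r)
    case 0
    have "filter (\<lambda>x. x \<le> 0) L = filter ((=) 0) L" "filter (\<lambda>x. x \<le> 0) L' = filter ((=) 0) L'"
      by (auto intro: filter_cong)
    then show ?thesis using assms(3) 0 by metis
  next
    case (Suc r')
    then show ?thesis using assms(3) filter_le_Suc[of r' L] filter_le_Suc[of r' L'] by simp
  qed
  have "mset L = mset L'"
    unfolding multiset_eq_iff count_mset count_list_eq_length_filter using c by simp
  then have "sort L' = L" using properties_for_sort assms(1) by metis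
  then show ?thesis using sorted_sort_id[OF assms(2)] by simp
qed

lemma cnt_pre: "1 \<le> r \<Longrightarrow> length (filter ((=) r) (pre t Ls m)) =
   (if r \<le> t then m r else 0) + length (filter ((=) r) (pre t Ls (\<lambda>_. 0)))"
proof (induction t)
  case 0 then show ?case by simp
next
  case (Suc t)
  then show ?case by (cases "r = Suc t") (auto simp: pre_Suc row_def filter_replicate)
qed

lemma decode:
  assumes v: "validL Ls" "validL Ls'"
    and h: "\<forall>j k. 1 \<le> j \<longrightarrow> j \<le> k \<longrightarrow> k \<le> n \<longrightarrow> st j k (pre n Ls m) = st j k (pre n Ls' m')"
  shows "pre n Ls m = pre n Ls' m'"
proof -
  define F where "F Ls k j = length (filter (\<lambda>x. x \<le> j) (Ls k))" for Ls :: "nat \<Rightarrow> nat list" and k j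
  define S where "S Ls j k = (\<Sum>T\<in>{k..n}. F Ls T j)" for Ls :: "nat \<Rightarrow> nat list" and j k
  have S: "S Ls j k = S Ls' j k" if "1 \<le> j" "j < k" "k \<le> n" for j k
    using h st_pre_D[OF v(1) \<open>j < k\<close>, of n m] st_pre_D[OF v(2) \<open>j < k\<close>, of n m'] that
    unfolding S_def F_def by (metis less_imp_le)
  have S2: "S Ls j k = F Ls k j + S Ls j (Suc k)" if "k \<le> n" for Ls j k
    unfolding S_def using sum.atLeast_Suc_atMost[OF that] by simp
  have F1: "F Ls k j = F Ls' k j" if "1 \<le> j" "j < k" "k \<le> n" for j k
  proof -
    have "S Ls j (Suc k) = S Ls' j (Suc k)"
    proof (cases "Suc k \<le> n")
      case True then show ?thesis using S that by simp
    next
      case False then show ?thesis by (simp add: S_def)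
    qed
    then show ?thesis using S[OF that] S2[OF that(3), of Ls j] S2[OF that(3), of Ls' j] by simp
  qed
  have Lk: "Ls k = Ls' k" if "1 \<le> k" "k \<le> n" for k
  proof -
    have b1: "set (Ls k) \<subseteq> {1..<k}" "set (Ls' k) \<subseteq> {1..<k}" "sorted (Ls k)" "sorted (Ls' k)"
      using v by (auto simp: validL_def)
    have "F Ls k j = F Ls' k j" for j
    proof -
      consider "j = 0" | "1 \<le> j" "j < k" | "k \<le> j" by linarith
      then show ?thesis
      proof cases
        case 1
        have "filter (\<lambda>x. x \<le> j) (Ls k) = []" "filter (\<lambda>x. x \<le> j) (Ls' k) = []"
          using b1 1 by (auto simp: filter_empty_conv)
        then show ?thesis by (simp add: F_def)
      next
        case 2 then show ?thesis using F1 that by simp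
      next
        case 3
        have e: "F Ls k j = length (Ls k)" "F Ls' k j = length (Ls' k)"
          using b1 3 unfolding F_def by (auto intro!: arg_cong[where f=length] filter_True)
        show ?thesis
        proof (cases "k = 1")
          case True
          then have "Ls k = []" "Ls' k = []" using b1 by auto
          then show ?thesis using e by simp
        next
          case False
          have "\<forall>x\<in>set (Ls k). x \<le> k - 1" "\<forall>x\<in>set (Ls' k). x \<le> k - 1" using b1 by fastforce+
          then have e2: "F Ls k (k - 1) = length (Ls k)" "F Ls' k (k - 1) = length (Ls' k)"
            unfolding F_def by (auto intro!: arg_cong[where f=length] filter_True)
          have "F Ls k (k - 1) = F Ls' k (k - 1)" using F1[of "k - 1" k] that False by simp
          then show ?thesis using e e2 by simp
        qed
      qed
    qed
    then show ?thesis using sorted_eq_filter[OF b1(3,4)] unfolding F_def by blast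
  qed
  define P where "P = pre n Ls m"
  define P' where "P' = pre n Ls' m'"
  have G: "length (filter (\<lambda>x. x \<le> j) P) = length (filter (\<lambda>x. x \<le> j) P')" if "j \<le> n" for j
  proof (cases "j = 0")
    case True
    have "filter (\<lambda>x. x \<le> j) P = []" "filter (\<lambda>x. x \<le> j) P' = []"
      using pre_letters[OF v(1), of _ n m] pre_letters[OF v(2), of _ n m'] True
      unfolding P_def P'_def by (fastforce simp: filter_empty_conv)+
    then show ?thesis by simp
  next
    case False
    then show ?thesis using h that stA[of j j] unfolding P_def P'_def by (metis le_refl less_one not_less)
  qed
  have mr: "m r = m' r" if "1 \<le> r" "r \<le> n" for r
  proof -
    obtain r' where r': "r = Suc r'" using \<open>1 \<le> r\<close> Suc_le_D by auto
    have "length (filter ((=) r) P) = length (filter ((=) r) P')"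
      using G[of r] G[of r'] that filter_le_Suc[of r' P] filter_le_Suc[of r' P'] r' by simp
    moreover have "pre n Ls (\<lambda>_. 0) = pre n Ls' (\<lambda>_. 0)" by (rule pre_cong) (use Lk in auto)
    ultimately show ?thesis using cnt_pre[of r n Ls m] cnt_pre[of r n Ls' m'] that
      unfolding P_def P'_def by simp
  qed
  show ?thesis by (rule pre_cong) (use Lk mr in auto)
qed



lemma tadd_NegInf2[simp]: "tadd a NegInf = a" by (cases a) auto
lemma tmul_NegInf2[simp]: "tmul a NegInf = NegInf" by (cases a) auto
lemma tadd_comm: "tadd a b = tadd b a" by (cases a; cases b) (auto simp: max.commute)
lemma tadd_assoc: "tadd (tadd a b) c = tadd a (tadd b c)" by (cases a; cases b; cases c) (auto simp: max.assoc)

lemma foldr_tadd: "foldr (\<lambda>k acc. tadd (f k) acc) xs a = tadd (foldr (\<lambda>k acc. tadd (f k) acc) xs NegInf) a"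
  by (induction xs) (auto simp: tadd_assoc)

lemma tsum_0[simp]: "tsum f 0 = NegInf" by (simp add: tsum_def)
lemma tsum_Suc: "tsum f (Suc N) = tadd (tsum f N) (f N)"
  unfolding tsum_def by (simp, subst foldr_tadd, simp)

lemma tsum_zero: "(\<And>k. f k = NegInf) \<Longrightarrow> tsum f N = NegInf"
  by (induction N) (auto simp: tsum_Suc)

lemma tsum_two_gen:
  assumes "\<And>k. k \<noteq> p \<Longrightarrow> k \<noteq> Suc p \<Longrightarrow> f k = NegInf"
  shows "tsum f N = (if N \<le> p then NegInf else if N = Suc p then f p else tadd (f p) (f (Suc p)))"
proof (induction N)
  case 0 then show ?case by simp
next
  case (Suc N)
  then show ?case using assms by (auto simp: tsum_Suc tadd_comm)
qed

lemma tsum_two: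
  assumes "\<And>k. k \<noteq> p \<Longrightarrow> k \<noteq> Suc p \<Longrightarrow> f k = NegInf" "Suc p < N"
  shows "tsum f N = tadd (f p) (f (Suc p))"
  using tsum_two_gen[where f=f and p=p and N=N, OF assms(1)] assms(2) by simp

definition enc :: "nat \<times> nat \<times> nat \<Rightarrow> nat \<Rightarrow> nat \<Rightarrow> trop" where
  "enc s p q = (case s of (a, b, d) \<Rightarrow>
     if p = 0 \<and> q = 0 then Fin (real a) else if p = 1 \<and> q = 1 then Fin (real b)
     else if p = 0 \<and> q = 1 then (if a + b = 0 then NegInf else Fin (real (a + b - d))) else NegInf)"

lemma nat_key: fixes a b d a' b' d' :: nat shows "d \<le> a \<Longrightarrow> d \<le> b \<Longrightarrow> d' \<le> a' \<Longrightarrow> d' \<le> b' \<Longrightarrow>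
  a + a' + (b + b') - min (d + a') (d' + b) = max (a + (a' + b' - d')) (a + b - d + b')"
  by (auto simp: min_def max_def)

lemma enc_mult:
  assumes "valid s" "valid t" "p < 2" "q < 2"
  shows "enc (smul s t) p q = tadd (tmul (enc s p 0) (enc t 0 q)) (tmul (enc s p 1) (enc t 1 q))"
proof -
  obtain a b d where s: "s = (a, b, d)" by (cases s) auto
  obtain a' b' d' where t: "t = (a', b', d')" by (cases t) auto
  have v: "d \<le> a" "d \<le> b" "d' \<le> a'" "d' \<le> b'" using assms(1,2) s t by (auto simp: valid_def)
  have pq: "p = 0 \<or> p = 1" "q = 0 \<or> q = 1" using assms(3,4) by auto
  have k: "real (a + a' + (b + b') - min (d + a') (d' + b)) = max (real a + real (a' + b' - d')) (real (a + b - d) + real b')"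
    using nat_key[OF v] by (metis of_nat_add of_nat_max)
  show ?thesis
  proof (cases "p = 0 \<and> q = 1")
    case True
    show ?thesis
    proof (cases "a + b = 0")
      case ab: True
      then have "a = 0" "b = 0" "d = 0" using v by auto
      then show ?thesis using True s t v by (auto simp: enc_def min_def)
    next
      case ab: False
      show ?thesis
      proof (cases "a' + b' = 0")
        case True
        then have "a' = 0" "b' = 0" "d' = 0" using v by auto
        then show ?thesis using \<open>p = 0 \<and> q = 1\<close> ab s t v by (auto simp: enc_def min_def)
      next
        case False
        then show ?thesis using \<open>p = 0 \<and> q = 1\<close> ab s t k by (auto simp: enc_def add.commute add.left_commute)
      qed
    qed
  next
    case False
    then show ?thesis using pq s t by (auto simp: enc_def)
  qed
qed

lemma enc_inj:
  assumes "valid s" "valid t" "enc s 0 0 = enc t 0 0" "enc s 1 1 = enc t 1 1" "enc s 0 1 = enc t 0 1"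
  shows "s = t"
proof -
  obtain a b d where s: "s = (a, b, d)" by (cases s) auto
  obtain a' b' d' where t: "t = (a', b', d')" by (cases t) auto
  have v: "d \<le> a" "d \<le> b" "d' \<le> a'" "d' \<le> b'" using assms(1,2) s t by (auto simp: valid_def)
  have ab: "a = a'" "b = b'" using assms(3,4) s t by (auto simp: enc_def)
  show ?thesis
  proof (cases "a + b = 0")
    case True then show ?thesis using v ab s t by auto
  next
    case False
    then have "real (a + b - d) = real (a' + b' - d')" using assms(5) s t ab by (auto simp: enc_def)
    then show ?thesis using v ab s t by auto
  qed
qed

definition PL :: "nat \<Rightarrow> (nat \<times> nat) list" where
  "PL n = concat (map (\<lambda>k. map (\<lambda>j. (j, k)) [1..<Suc k]) [1..<Suc n])"

lemma PL_Suc: "PL (Suc n) = PL n @ map (\<lambda>j. (j, Suc n)) [1..<Suc (Suc n)]"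
  unfolding PL_def by simp

lemma PL_len: "2 * length (PL n) = n * (n + 1)"
proof (induction n)
  case 0 then show ?case by (simp add: PL_def)
next
  case (Suc n)
  have "2 * length (PL (Suc n)) = 2 * length (PL n) + 2 * Suc n" by (simp add: PL_Suc)
  also have "... = Suc n * (Suc n + 1)" using Suc by (simp add: algebra_simps)
  finally show ?case .
qed

lemma PL_set: assumes "1 \<le> j" "j \<le> k" "k \<le> n" shows "(j, k) \<in> set (PL n)"
proof -
  have "j \<in> set [1..<Suc k]" using assms by auto
  hence a: "(j,k) \<in> set (map (\<lambda>j. (j,k)) [1..<Suc k])" by (simp only: set_map image_eqI)
  have "k \<in> set [1..<Suc n]" using assms by auto
  hence "map (\<lambda>j. (j,k)) [1..<Suc k] \<in> set (map (\<lambda>k. map (\<lambda>j. (j, k)) [1..<Suc k]) [1..<Suc n])"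
    by (simp only: set_map image_eqI)
  with a show ?thesis unfolding PL_def set_concat by (rule UN_I[rotated])
qed

definition rho :: "nat \<Rightarrow> nat list \<Rightarrow> tmat" where
  "rho n w = (\<lambda>i l. if i < n * (n + 1) \<and> l < n * (n + 1) \<and> i div 2 = l div 2
      then enc (st (fst (PL n ! (i div 2))) (snd (PL n ! (i div 2))) w) (i mod 2) (l mod 2) else NegInf)"

lemma rho_nil: "rho n [] = tmat_one (n * (n + 1))"
proof (intro ext)
  fix i l
  show "rho n [] i l = tmat_one (n * (n + 1)) i l"
  proof (cases "i < n * (n + 1) \<and> l < n * (n + 1) \<and> i div 2 = l div 2")
    case True
    have "i mod 2 = l mod 2 \<longleftrightarrow> i = l" using True by (metis div_mod_decomp)
    then show ?thesis using True by (auto simp: rho_def tmat_one_def enc_def)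
  next
    case False
    then show ?thesis by (auto simp: rho_def tmat_one_def)
  qed
qed


lemma rho_hom: "rho n (u @ v) = tmat_mult (n * (n + 1)) (rho n u) (rho n v)"
proof (intro ext)
  fix i l
  define N where "N = n * (n + 1)"
  have evN: "even N" unfolding N_def by simp
  show "rho n (u @ v) i l = tmat_mult (n * (n + 1)) (rho n u) (rho n v) i l"
  proof (cases "i < N")
    case False
    then show ?thesis unfolding tmat_mult_def N_def[symmetric]
      by (subst tsum_zero) (auto simp: rho_def N_def)
  next
    case iN: True
    define p where "p = 2 * (i div 2)"
    have pN: "Suc p < N" using iN evN unfolding p_def by presburger
    have p: "p div 2 = i div 2" "Suc p div 2 = i div 2" "p mod 2 = 0" "Suc p mod 2 = 1"
      unfolding p_def by auto
    have "tmat_mult N (rho n u) (rho n v) i l =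
          tadd (tmul (rho n u i p) (rho n v p l)) (tmul (rho n u i (Suc p)) (rho n v (Suc p) l))"
      unfolding tmat_mult_def
    proof (rule tsum_two[OF _ pN])
      fix k assume "k \<noteq> p" "k \<noteq> Suc p"
      then have "k div 2 \<noteq> i div 2" unfolding p_def by presburger
      then show "tmul (rho n u i k) (rho n v k l) = NegInf" by (simp add: rho_def)
    qed
    also have "... = rho n (u @ v) i l"
    proof (cases "l < N \<and> i div 2 = l div 2")
      case False
      then show ?thesis using p pN by (auto simp: rho_def N_def)
    next
      case True
      define j k where "j = fst (PL n ! (i div 2))" and "k = snd (PL n ! (i div 2))"
      have "i mod 2 < 2" "l mod 2 < 2" by auto
      note em = enc_mult[OF st_valid[of j k u] st_valid[of j k v] this]
      have pN': "p < N" using pN by simp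
      have r1: "rho n u i p = enc (st j k u) (i mod 2) 0"
        using iN pN' p unfolding rho_def N_def j_def k_def by simp
      have r2: "rho n u i (Suc p) = enc (st j k u) (i mod 2) 1"
        using iN pN p unfolding rho_def N_def j_def k_def by simp
      have r3: "rho n v p l = enc (st j k v) 0 (l mod 2)"
        using True pN' p unfolding rho_def N_def j_def k_def by simp
      have r4: "rho n v (Suc p) l = enc (st j k v) 1 (l mod 2)"
        using True pN p unfolding rho_def N_def j_def k_def by simp
      have r5: "rho n (u @ v) i l = enc (smul (st j k u) (st j k v)) (i mod 2) (l mod 2)"
        using True iN unfolding rho_def N_def j_def k_def st_append by simp
      show ?thesis unfolding r1 r2 r3 r4 r5 em ..
    qed
    finally show ?thesis unfolding N_def by simp
  qed
qed

lemma blk_ar1: "(i::nat) div 2 = j div 2 \<Longrightarrow> j < i \<Longrightarrow> i mod 2 = 1 \<and> j mod 2 = 0" by presburger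
lemma blk_ar2: "(i::nat) div 2 = j div 2 \<Longrightarrow> i mod 2 = j mod 2 \<Longrightarrow> i = j" by presburger
lemma blk_ar3: "(i::nat) div 2 = j div 2 \<Longrightarrow> i mod 2 = 0 \<Longrightarrow> j mod 2 = 1 \<Longrightarrow> even i \<and> j = i + 1" by presburger

lemma enc_nonneg: "enc s p q \<noteq> NegInf \<Longrightarrow> p = q \<or> (p = 0 \<and> q = 1)"
  by (cases s) (auto simp: enc_def split: if_splits)

lemma enc_10: "enc s (Suc 0) 0 = NegInf" by (cases s) (auto simp: enc_def)

lemma rho_block: "block2_upper (n * (n + 1)) (rho n w)"
  unfolding block2_upper_def upper_tri_def tmats_def
proof (intro conjI allI impI CollectI)
  fix i j
  show "n * (n + 1) \<le> i \<or> n * (n + 1) \<le> j \<Longrightarrow> rho n w i j = NegInf" by (auto simp: rho_def)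
  show "j < i \<Longrightarrow> rho n w i j = NegInf"
  proof -
    assume ji: "j < i"
    show ?thesis
    proof (cases "i div 2 = j div 2")
      case True
      then have "i mod 2 = 1" "j mod 2 = 0" using blk_ar1 ji by blast+
      then show ?thesis by (simp add: rho_def enc_10)
    next
      case False then show ?thesis by (simp add: rho_def)
    qed
  qed
  show "rho n w i j \<noteq> NegInf \<Longrightarrow> i = j \<or> even i \<and> j = i + 1"
  proof -
    assume a: "rho n w i j \<noteq> NegInf"
    have c: "i < n * (n + 1) \<and> j < n * (n + 1) \<and> i div 2 = j div 2"
      by (rule ccontr) (use a in \<open>simp only: rho_def if_False, simp\<close>)
    then have "rho n w i j = enc (st (fst (PL n ! (i div 2))) (snd (PL n ! (i div 2))) w) (i mod 2) (j mod 2)"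
      unfolding rho_def using c by (simp only: if_True simp_thms)
    then have "enc (st (fst (PL n ! (i div 2))) (snd (PL n ! (i div 2))) w) (i mod 2) (j mod 2) \<noteq> NegInf"
      using a by simp
    then have d: "i mod 2 = j mod 2 \<or> (i mod 2 = 0 \<and> j mod 2 = 1)" by (rule enc_nonneg)
    have b: "i div 2 = j div 2" using c by simp
    show ?thesis
    proof (cases "i mod 2 = j mod 2")
      case True then show ?thesis using blk_ar2[OF b] by simp
    next
      case False then show ?thesis using d blk_ar3[OF b] by simp
    qed
  qed
qed



lemma rho_entries:
  assumes "b < length (PL n)" "PL n ! b = (j, k)"
  shows "rho n w (2*b) (2*b) = enc (st j k w) 0 0"
        "rho n w (2*b+1) (2*b+1) = enc (st j k w) 1 1"
        "rho n w (2*b) (2*b+1) = enc (st j k w) 0 1"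
proof -
  have N: "2*b+1 < n*(n+1)" using assms(1) PL_len[of n] by linarith
  have d: "(2*b) div 2 = b" "(2*b+1) div 2 = b" "(2*b) mod 2 = 0" "(2*b+1) mod 2 = 1" by auto
  show "rho n w (2*b) (2*b) = enc (st j k w) 0 0"
    "rho n w (2*b+1) (2*b+1) = enc (st j k w) 1 1"
    "rho n w (2*b) (2*b+1) = enc (st j k w) 0 1"
    using N assms(2) unfolding rho_def d by auto
qed

lemma rho_faithful:
  assumes u: "u \<in> ch_words n" and v: "v \<in> ch_words n" and e: "rho n u = rho n v"
  shows "ch_eq n u v"
proof -
  have stq: "st j k u = st j k v" if "1 \<le> j" "j \<le> k" "k \<le> n" for j k
  proof -
    have "(j, k) \<in> set (PL n)" using PL_set that by blast
    then obtain b where b: "b < length (PL n)" "PL n ! b = (j, k)" by (metis in_set_conv_nth)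
    show ?thesis
      using enc_inj[OF st_valid st_valid] rho_entries[OF b, of u] rho_entries[OF b, of v] e by metis
  qed
  obtain Lu mu where U: "validL Lu" "ch_eq n u (pre n Lu mu)"
    using nf_exists[of u n] u by (auto simp: ch_words_def)
  obtain Lv mv where V: "validL Lv" "ch_eq n v (pre n Lv mv)"
    using nf_exists[of v n] v by (auto simp: ch_words_def)
  have "\<forall>j k. 1 \<le> j \<longrightarrow> j \<le> k \<longrightarrow> k \<le> n \<longrightarrow> st j k (pre n Lu mu) = st j k (pre n Lv mv)"
    using stq st_ch_eq[OF U(2)] st_ch_eq[OF V(2)] by metis
  then have "pre n Lu mu = pre n Lv mv" by (rule decode[OF U(1) V(1)])
  then show ?thesis using U(2) V(2) by (metis ch_eq_sym ch_eq_trans)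
qed

theorem theoremI:
  fixes n :: nat
  assumes "n \<ge> 1"
  shows "\<exists>\<rho> :: nat list \<Rightarrow> tmat.
     \<rho> [] = tmat_one (n * (n + 1)) \<and>
     (\<forall>u \<in> ch_words n. \<forall>v \<in> ch_words n.
        \<rho> (u @ v) = tmat_mult (n * (n + 1)) (\<rho> u) (\<rho> v)) \<and>
     (\<forall>u \<in> ch_words n. \<forall>v \<in> ch_words n. ch_eq n u v \<longrightarrow> \<rho> u = \<rho> v) \<and>
     (\<forall>u \<in> ch_words n. \<forall>v \<in> ch_words n. \<rho> u = \<rho> v \<longrightarrow> ch_eq n u v) \<and>
     (\<forall>u \<in> ch_words n. block2_upper (n * (n + 1)) (\<rho> u))"
proof (intro exI[of _ "rho n"] conjI ballI impI)
  show "rho n [] = tmat_one (n * (n + 1))" by (rule rho_nil)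
next
  fix u v show "rho n (u @ v) = tmat_mult (n * (n + 1)) (rho n u) (rho n v)" by (rule rho_hom)
next
  fix u v assume "ch_eq n u v"
  then have h: "st j k u = st j k v" for j k by (rule st_ch_eq)
  show "rho n u = rho n v" unfolding rho_def h ..
next
  fix u v assume "u \<in> ch_words n" "v \<in> ch_words n" "rho n u = rho n v"
  then show "ch_eq n u v" by (rule rho_faithful)
next
  fix u show "block2_upper (n * (n + 1)) (rho n u)" by (rule rho_block)
qed

end
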